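(* Let $n\ge2$ and $G=C_n\oplus C_n$. Let $(e_1,e_2)$ be a basis of $G$, let $x_1,x_2\in[0,n-1]$, and let $S=e_1^{[n-1]}\cdot e_2^{[n-1]}\cdot(x_1e_1+x_2e_2)^{[n-1]}$. Then $0\notin\Sigma_{\le n}(S)$ if and only if $(-x_1k)_n+(-x_2k)_n+(k)_n>n$ for every $k\in[1,n-1]$.
   Context: $C_n$ is a cyclic group of order $n$; $[a,b]$ denotes the integer interval; for integers $x$ and $n\ge1$, $(x)_n\in[0,n-1]$ denotes the least non-negative residue of $x$ modulo $n$. A basis of $G$ is an ordered pair $(e_1,e_2)$ with $G=\langle e_1\rangle\oplus\langle e_2\rangle$. A sequence over $G$ is a finite unordered list (multiset) of elements, $g^{[t]}$ denotes $g$ repeated $t$ times and $\cdot$ denotes concatenation. $\Sigma_{\le N}(S)$ is the set of sums of the terms of subsequences $T$ of $S$ with $1\le |T|\le N$. *)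

theory Defs
  imports Main "HOL-Library.Multiset"
begin

definition grp :: "int \<Rightarrow> (int \<times> int) set" where
  "grp n = {0..<n} \<times> {0..<n}"

definition gadd :: "int \<Rightarrow> int \<times> int \<Rightarrow> int \<times> int \<Rightarrow> int \<times> int" where
  "gadd n g h = ((fst g + fst h) mod n, (snd g + snd h) mod n)"

definition gsmul :: "int \<Rightarrow> int \<Rightarrow> int \<times> int \<Rightarrow> int \<times> int" where
  "gsmul n k g = ((k * fst g) mod n, (k * snd g) mod n)"

definition cyc :: "int \<Rightarrow> int \<times> int \<Rightarrow> (int \<times> int) set" where
  "cyc n g = {gsmul n k g | k. True}"

definition is_basis :: "int \<Rightarrow> int \<times> int \<Rightarrow> int \<times> int \<Rightarrow> bool" where
  "is_basis n e1 e2 \<longleftrightarrow> e1 \<in> grp n \<and> e2 \<in> grp n \<and>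
     cyc n e1 \<inter> cyc n e2 = {(0,0)} \<and>
     {gadd n a b | a b. a \<in> cyc n e1 \<and> b \<in> cyc n e2} = grp n"

definition gsum :: "int \<Rightarrow> (int \<times> int) multiset \<Rightarrow> int \<times> int" where
  "gsum n T = ((\<Sum>x\<in>#T. fst x) mod n, (\<Sum>x\<in>#T. snd x) mod n)"

definition sigma_le :: "int \<Rightarrow> nat \<Rightarrow> (int \<times> int) multiset \<Rightarrow> (int \<times> int) set" where
  "sigma_le n N S = {gsum n T | T. T \<subseteq># S \<and> 1 \<le> size T \<and> size T \<le> N}"

end

theory Submission
  imports Defs
begin

lemma split3:
  assumes "T \<subseteq># A + B + C"
  obtains T1 T2 T3 where "T1 \<subseteq># A" "T2 \<subseteq># B" "T3 \<subseteq># C" "T = T1 + T2 + T3"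
proof -
  define T1 where "T1 = T \<inter># A"
  define R where "R = T - T1"
  define T2 where "T2 = R \<inter># B"
  define T3 where "T3 = R - T2"
  have c: "count T x \<le> count A x + count B x + count C x" for x
    using assms by (metis count_union subseteq_mset_def)
  have "T1 \<subseteq># A" unfolding T1_def by simp
  moreover have "T2 \<subseteq># B" unfolding T2_def by simp
  moreover have "T3 \<subseteq># C"
    unfolding subseteq_mset_def T3_def T2_def R_def T1_def
    using c by (auto simp: min_def) (metis add.commute le_diff_conv)
  moreover have "T = T1 + T2 + T3"
    unfolding multiset_eq_iff T3_def T2_def R_def T1_def by (auto simp: min_def)
  ultimately show ?thesis using that by blast
qed

lemma gsmul_mod_period:
  assumes "m > 0" "gsmul n m e = (0,0)"
  shows "gsmul n k e = gsmul n (k mod m) e"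
proof -
  have d1: "n dvd m * fst e" and d2: "n dvd m * snd e"
    using assms(2) by (auto simp: gsmul_def dvd_eq_mod_eq_0)
  have "(k * fst e) mod n = ((k mod m) * fst e) mod n"
  proof -
    have "k * fst e = (k div m * m + k mod m) * fst e" by (simp only: div_mult_mod_eq)
    also have "\<dots> = (k div m) * (m * fst e) + (k mod m) * fst e" by (simp only: distrib_right mult.assoc)
    finally have "k * fst e = (k div m) * (m * fst e) + (k mod m) * fst e" .
    then have "k * fst e - (k mod m) * fst e = (k div m) * (m * fst e)" by simp
    moreover have "n dvd (k div m) * (m * fst e)" using d1 by (rule dvd_mult)
    ultimately have "n dvd k * fst e - (k mod m) * fst e" by simp
    then show ?thesis by (simp add: mod_eq_dvd_iff)
  qed
  moreover have "(k * snd e) mod n = ((k mod m) * snd e) mod n"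
  proof -
    have "k * snd e = (k div m * m + k mod m) * snd e" by (simp only: div_mult_mod_eq)
    also have "\<dots> = (k div m) * (m * snd e) + (k mod m) * snd e" by (simp only: distrib_right mult.assoc)
    finally have "k * snd e = (k div m) * (m * snd e) + (k mod m) * snd e" .
    then have "k * snd e - (k mod m) * snd e = (k div m) * (m * snd e)" by simp
    moreover have "n dvd (k div m) * (m * snd e)" using d2 by (rule dvd_mult)
    ultimately have "n dvd k * snd e - (k mod m) * snd e" by simp
    then show ?thesis by (simp add: mod_eq_dvd_iff)
  qed
  ultimately show ?thesis by (simp add: gsmul_def)
qed

lemma card_cyc:
  assumes "m > 0" "gsmul n m e = (0,0)"
  shows "card (cyc n e) \<le> nat m"
proof -
  have "cyc n e \<subseteq> (\<lambda>k. gsmul n k e) ` {0..<m}"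
  proof
    fix y assume "y \<in> cyc n e"
    then obtain k where "y = gsmul n k e" by (auto simp: cyc_def)
    then have "y = gsmul n (k mod m) e" using gsmul_mod_period[OF assms] by simp
    moreover have "k mod m \<in> {0..<m}" using assms(1) by simp
    ultimately show "y \<in> (\<lambda>k. gsmul n k e) ` {0..<m}" by blast
  qed
  then have "card (cyc n e) \<le> card ((\<lambda>k. gsmul n k e) ` {0..<m})"
    by (intro card_mono) auto
  also have "\<dots> \<le> card {0..<m}" by (rule card_image_le) simp
  finally show ?thesis by simp
qed

lemma finite_cyc: "n > 0 \<Longrightarrow> finite (cyc n e)"
proof -
  assume "n > 0"
  have "gsmul n n e = (0,0)" by (simp add: gsmul_def)
  have "cyc n e \<subseteq> (\<lambda>k. gsmul n k e) ` {0..<n}"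
  proof
    fix y assume "y \<in> cyc n e"
    then obtain k where "y = gsmul n k e" by (auto simp: cyc_def)
    then have "y = gsmul n (k mod n) e" using gsmul_mod_period[OF \<open>n>0\<close> \<open>gsmul n n e = (0,0)\<close>] by simp
    moreover have "k mod n \<in> {0..<n}" using \<open>n>0\<close> by simp
    ultimately show "y \<in> (\<lambda>k. gsmul n k e) ` {0..<n}" by blast
  qed
  then show ?thesis by (rule finite_subset) simp
qed

lemma basis_swap: "is_basis n e1 e2 \<Longrightarrow> is_basis n e2 e1"
  unfolding is_basis_def
proof (elim conjE, intro conjI)
  assume h: "{gadd n a b |a b. a \<in> cyc n e1 \<and> b \<in> cyc n e2} = grp n"
  have "gadd n a b = gadd n b a" for a b by (simp add: gadd_def add.commute)
  then show "{gadd n a b |a b. a \<in> cyc n e2 \<and> b \<in> cyc n e1} = grp n"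
  proof -
    have "{gadd n a b |a b. a \<in> cyc n e2 \<and> b \<in> cyc n e1} = {gadd n a b |a b. a \<in> cyc n e1 \<and> b \<in> cyc n e2}"
    proof (intro set_eqI iffI)
      fix y assume "y \<in> {gadd n a b |a b. a \<in> cyc n e2 \<and> b \<in> cyc n e1}"
      then obtain a b where "y = gadd n a b" "a \<in> cyc n e2" "b \<in> cyc n e1" by blast
      then show "y \<in> {gadd n a b |a b. a \<in> cyc n e1 \<and> b \<in> cyc n e2}"
        using \<open>\<And>a b. gadd n a b = gadd n b a\<close> by blast
    next
      fix y assume "y \<in> {gadd n a b |a b. a \<in> cyc n e1 \<and> b \<in> cyc n e2}"
      then obtain a b where "y = gadd n a b" "a \<in> cyc n e1" "b \<in> cyc n e2" by blast
      then show "y \<in> {gadd n a b |a b. a \<in> cyc n e2 \<and> b \<in> cyc n e1}"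
        using \<open>\<And>a b. gadd n a b = gadd n b a\<close> by blast
    qed
    then show ?thesis using h by simp
  qed
qed (auto)

lemma basis_order:
  assumes "is_basis n e1 e2" "n \<ge> 1" "0 < m" "m < n" "gsmul n m e1 = (0,0)"
  shows False
proof -
  have g0: "grp n = {gadd n a b |a b. a \<in> cyc n e1 \<and> b \<in> cyc n e2}"
    using assms(1) unfolding is_basis_def by auto
  have g1: "{gadd n a b |a b. a \<in> cyc n e1 \<and> b \<in> cyc n e2} = (\<lambda>(a,b). gadd n a b) ` (cyc n e1 \<times> cyc n e2)"
    by (auto simp: image_def)
  have g: "grp n = (\<lambda>(a,b). gadd n a b) ` (cyc n e1 \<times> cyc n e2)" using g0 g1 by simp
  have "nat n * nat n = card (grp n)" by (simp add: grp_def card_cartesian_product)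
  also have "\<dots> \<le> card (cyc n e1 \<times> cyc n e2)"
    unfolding g by (rule card_image_le) (use assms finite_cyc in auto)
  also have "\<dots> = card (cyc n e1) * card (cyc n e2)" by (simp add: card_cartesian_product)
  also have "\<dots> \<le> nat m * nat n"
    using card_cyc[OF assms(3,5)] card_cyc[of n n e2] assms(2)
    by (intro mult_mono) (auto simp: gsmul_def)
  finally have "nat n * nat n \<le> nat m * nat n" .
  moreover have "nat m * nat n < nat n * nat n" using assms by (intro mult_strict_right_mono) auto
  ultimately show False by linarith
qed

lemma basis_order':
  assumes "is_basis n e1 e2" "n \<ge> 1" "gsmul n A e1 = (0,0)"
  shows "A mod n = 0"
proof (rule ccontr)
  assume ne: "A mod n \<noteq> 0"
  have "gsmul n (A mod n) e1 = gsmul n A e1"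
    by (simp add: gsmul_def mod_mult_left_eq)
  then have "gsmul n (A mod n) e1 = (0,0)" using assms by simp
  moreover have "0 < A mod n" "A mod n < n" using ne assms(2)
    by (simp_all add: order_le_neq_trans)
  ultimately show False using basis_order[OF assms(1,2)] by blast
qed

lemma coord_zero:
  assumes "is_basis n e1 e2" "n \<ge> 1"
    and "(A*fst e1 + B*fst e2) mod n = 0" "(A*snd e1 + B*snd e2) mod n = 0"
  shows "A mod n = 0 \<and> B mod n = 0"
proof -
  have u1: "gsmul n A e1 \<in> cyc n e1" by (auto simp: cyc_def)
  have u2: "gsmul n (-B) e2 \<in> cyc n e2" by (auto simp: cyc_def)
  have eq: "gsmul n A e1 = gsmul n (-B) e2"
  proof -
    have "(A*fst e1) mod n = (-B*fst e2) mod n"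
      using assms(3) by (simp add: mod_eq_dvd_iff dvd_eq_mod_eq_0)
    moreover have "(A*snd e1) mod n = (-B*snd e2) mod n"
      using assms(4) by (simp add: mod_eq_dvd_iff dvd_eq_mod_eq_0)
    ultimately show ?thesis by (simp add: gsmul_def)
  qed
  have "gsmul n A e1 = (0,0)" using u1 u2 eq assms(1) unfolding is_basis_def by auto
  moreover have "gsmul n (-B) e2 = (0,0)" using u1 u2 eq assms(1) unfolding is_basis_def by auto
  ultimately have "A mod n = 0" "(-B) mod n = 0"
    using basis_order'[OF assms(1,2)] basis_order'[OF basis_swap[OF assms(1)] assms(2)] by auto
  then show ?thesis by (simp add: mod_eq_0_iff_dvd)
qed

lemma gsum3:
  "gsum n (replicate_mset a e1 + replicate_mset b e2 + replicate_mset k g) =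
   ((int a * fst e1 + int b * fst e2 + int k * fst g) mod n,
    (int a * snd e1 + int b * snd e2 + int k * snd g) mod n)"
  by (simp add: gsum_def)

lemma gsum_g:
  "gsum n (replicate_mset a e1 + replicate_mset b e2 + replicate_mset k (gadd n (gsmul n x1 e1) (gsmul n x2 e2))) =
   (((int a + int k*x1)*fst e1 + (int b + int k*x2)*fst e2) mod n,
    ((int a + int k*x1)*snd e1 + (int b + int k*x2)*snd e2) mod n)"
proof -
  let ?g = "gadd n (gsmul n x1 e1) (gsmul n x2 e2)"
  have h1: "fst ?g mod n = (x1*fst e1 + x2*fst e2) mod n" by (simp add: gadd_def gsmul_def mod_add_eq)
  have h2: "snd ?g mod n = (x1*snd e1 + x2*snd e2) mod n" by (simp add: gadd_def gsmul_def mod_add_eq)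
  have "(int a * fst e1 + int b * fst e2 + int k * fst ?g) mod n
      = (int a * fst e1 + int b * fst e2 + int k * (x1*fst e1 + x2*fst e2)) mod n"
    by (metis h1 mod_add_right_eq mod_mult_right_eq)
  also have "\<dots> = ((int a + int k*x1)*fst e1 + (int b + int k*x2)*fst e2) mod n"
    by (simp add: algebra_simps)
  finally have f: "(int a * fst e1 + int b * fst e2 + int k * fst ?g) mod n = ((int a + int k*x1)*fst e1 + (int b + int k*x2)*fst e2) mod n" .
  have "(int a * snd e1 + int b * snd e2 + int k * snd ?g) mod n
      = (int a * snd e1 + int b * snd e2 + int k * (x1*snd e1 + x2*snd e2)) mod n"
    by (metis h2 mod_add_right_eq mod_mult_right_eq)
  also have "\<dots> = ((int a + int k*x1)*snd e1 + (int b + int k*x2)*snd e2) mod n"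
    by (simp add: algebra_simps)
  finally have s: "(int a * snd e1 + int b * snd e2 + int k * snd ?g) mod n = ((int a + int k*x1)*snd e1 + (int b + int k*x2)*snd e2) mod n" .
  show ?thesis unfolding gsum3 using f s by simp
qed

lemma nat3: "(a::int) + b + k \<le> n \<Longrightarrow> 0 \<le> a \<Longrightarrow> 0 \<le> b \<Longrightarrow> 0 \<le> k \<Longrightarrow> nat a + nat b + nat k \<le> nat n"
  by linarith

theorem lemma2p1:
  fixes n x1 x2 :: int and e1 e2 :: "int \<times> int"
  assumes "n \<ge> 2"
    and "is_basis n e1 e2"
    and "x1 \<in> {0..n-1}" and "x2 \<in> {0..n-1}"
  shows "(0,0) \<notin> sigma_le n (nat n)
            (replicate_mset (nat (n-1)) e1 + replicate_mset (nat (n-1)) e2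
             + replicate_mset (nat (n-1)) (gadd n (gsmul n x1 e1) (gsmul n x2 e2)))
         \<longleftrightarrow> (\<forall>k\<in>{1..n-1}. (-x1*k) mod n + (-x2*k) mod n + k mod n > n)"
proof -
  define g where "g = gadd n (gsmul n x1 e1) (gsmul n x2 e2)"
  define N where "N = nat (n-1)"
  define S where "S = replicate_mset N e1 + replicate_mset N e2 + replicate_mset N g"
  have n1: "n \<ge> 1" using assms(1) by simp
  have L: "\<not> (\<forall>k\<in>{1..n-1}. (-x1*k) mod n + (-x2*k) mod n + k mod n > n)" if z: "(0,0) \<in> sigma_le n (nat n) S"
  proof -
    obtain T where T: "T \<subseteq># S" "1 \<le> size T" "size T \<le> nat n" "gsum n T = (0,0)"
      using z unfolding sigma_le_def by auto
    obtain T1 T2 T3 where TT: "T1 \<subseteq># replicate_mset N e1" "T2 \<subseteq># replicate_mset N e2"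
        "T3 \<subseteq># replicate_mset N g" "T = T1 + T2 + T3"
      using split3[OF T(1)[unfolded S_def]] by blast
    obtain a where a: "a \<le> N" "T1 = replicate_mset a e1" using TT(1) by (rule msubseteq_replicate_msetE)
    obtain b where b: "b \<le> N" "T2 = replicate_mset b e2" using TT(2) by (rule msubseteq_replicate_msetE)
    obtain k where k: "k \<le> N" "T3 = replicate_mset k g" using TT(3) by (rule msubseteq_replicate_msetE)
    have sz: "size T = a + b + k" using TT(4) a b k by simp
    have "gsum n (replicate_mset a e1 + replicate_mset b e2 + replicate_mset k g) = (0,0)"
      using T(4) TT(4) a b k by simp
    then have "((int a + int k*x1)*fst e1 + (int b + int k*x2)*fst e2) mod n = 0"
       "((int a + int k*x1)*snd e1 + (int b + int k*x2)*snd e2) mod n = 0"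
      unfolding g_def gsum_g by auto
    from coord_zero[OF assms(2) n1 this]
    have m1: "(int a + int k*x1) mod n = 0" and m2: "(int b + int k*x2) mod n = 0" by auto
    have aN: "int a < n" "int b < n" "int k < n" using a b k N_def assms(1) by auto
    show ?thesis
    proof (cases "k = 0")
      case True
      then have "int a mod n = 0" "int b mod n = 0" using m1 m2 by auto
      then have "a = 0" "b = 0" using aN by auto
      then show ?thesis using sz T(2) True by simp
    next
      case False
      have e1': "(-x1*int k) mod n = int a"
      proof -
        have "n dvd (int a + int k*x1)" using m1 by (simp add: mod_eq_0_iff_dvd)
        then have "n dvd (-x1*int k - int a)"
          using dvd_minus_iff[of n "int a + int k*x1"] minus_add_distrib[of "int a" "int k*x1"]
          by (metis diff_conv_add_uminus add.commute mult.commute mult_minus_left)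
        then have "(-x1*int k) mod n = int a mod n" by (simp add: mod_eq_dvd_iff)
        also have "\<dots> = int a" using aN by simp
        finally show ?thesis .
      qed
      have e2': "(-x2*int k) mod n = int b"
      proof -
        have "n dvd (int b + int k*x2)" using m2 by (simp add: mod_eq_0_iff_dvd)
        then have "n dvd (-x2*int k - int b)"
          using dvd_minus_iff[of n "int b + int k*x2"] minus_add_distrib[of "int b" "int k*x2"]
          by (metis diff_conv_add_uminus add.commute mult.commute mult_minus_left)
        then have "(-x2*int k) mod n = int b mod n" by (simp add: mod_eq_dvd_iff)
        also have "\<dots> = int b" using aN by simp
        finally show ?thesis .
      qed
      have "int k mod n = int k" using aN by simp
      moreover have "int k \<in> {1..n-1}" using False aN by auto
      moreover have "int a + int b + int k \<le> n" using sz T(3) assms(1) by linarith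
      ultimately show ?thesis using e1' e2'
      proof (intro notI)
        assume H: "\<forall>k\<in>{1..n-1}. (-x1*k) mod n + (-x2*k) mod n + k mod n > n"
          and c1: "int k mod n = int k" and c2: "int k \<in> {1..n-1}" and c3: "int a + int b + int k \<le> n"
        have "(-x1*int k) mod n + (-x2*int k) mod n + int k mod n > n" using H c2 by blast
        then show False using c1 c3 e1' e2' by linarith
      qed
    qed
  qed
  have R: "(0,0) \<in> sigma_le n (nat n) S" if nk: "\<not> (\<forall>k\<in>{1..n-1}. (-x1*k) mod n + (-x2*k) mod n + k mod n > n)"
  proof -
    obtain k where k: "k \<in> {1..n-1}" "(-x1*k) mod n + (-x2*k) mod n + k mod n \<le> n" using nk by force
    define a where "a = (-x1*k) mod n"
    define b where "b = (-x2*k) mod n"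
    have ab: "0 \<le> a" "a < n" "0 \<le> b" "b < n" using assms(1) unfolding a_def b_def by auto
    have kk: "k mod n = k" using k by simp
    define T where "T = replicate_mset (nat a) e1 + replicate_mset (nat b) e2 + replicate_mset (nat k) g"
    have "T \<subseteq># S" unfolding T_def S_def N_def using ab k
      by (intro subset_mset.add_mono) (auto simp: replicate_mset_msubseteq_iff)
    moreover have "size T = nat a + nat b + nat k" unfolding T_def by simp
    moreover have "1 \<le> nat a + nat b + nat k" using k by auto
    moreover have "nat a + nat b + nat k \<le> nat n"
    proof -
      from k(2) have s1: "a + b + k \<le> n" unfolding kk a_def[symmetric] b_def[symmetric] .
      have k0: "0 \<le> k" using k(1) by simp
      show ?thesis by (rule nat3[OF s1 ab(1) ab(3) k0])
    qed
    moreover have "gsum n T = (0,0)"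
    proof -
      have k0: "0 \<le> k" using k(1) by simp
      have "(a + k*x1) mod n = (-x1*k + k*x1) mod n" unfolding a_def by (rule mod_add_left_eq)
      then have "(a + k*x1) mod n = 0" by simp
      then have d1: "n dvd (int (nat a) + int (nat k)*x1)" using ab(1) k0 by (simp add: mod_eq_0_iff_dvd)
      have "(b + k*x2) mod n = (-x2*k + k*x2) mod n" unfolding b_def by (rule mod_add_left_eq)
      then have "(b + k*x2) mod n = 0" by simp
      then have d2: "n dvd (int (nat b) + int (nat k)*x2)" using ab(3) k0 by (simp add: mod_eq_0_iff_dvd)
      show ?thesis unfolding T_def g_def gsum_g using d1 d2
        by (auto simp: mod_eq_0_iff_dvd intro!: dvd_add dvd_mult2)
    qed
    ultimately have "T \<subseteq># S \<and> 1 \<le> size T \<and> size T \<le> nat n \<and> (0,0) = gsum n T" by simp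
    then show ?thesis unfolding sigma_le_def by blast
  qed
  have SE: "replicate_mset (nat (n-1)) e1 + replicate_mset (nat (n-1)) e2
             + replicate_mset (nat (n-1)) (gadd n (gsmul n x1 e1) (gsmul n x2 e2)) = S"
    unfolding S_def N_def g_def ..
  show ?thesis unfolding SE using L R by blast
qed

end
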